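(* Let $\mathbf{E},\mathbf{Y}$ be Euclidean spaces, $\mathcal{X}\subset\mathbf{E}$ nonempty closed convex, $h\colon\mathbf{Y}\to\mathbb{R}$ convex, $F\colon\mathbf{E}\to\mathbf{Y}$ differentiable with Jacobian $\nabla F(x)$, and $f=h\circ F$. Let $\mathcal{X}^*=\operatorname{argmin}_{\mathcal{X}}f$ be nonempty and fix $\bar x\in\mathcal{X}^*$. Suppose for some $\epsilon,\mu,\rho>0$: (approximation) $|f(y)-f_x(y)|\le\frac\rho2\|y-x\|^2$ for all $x\in\mathcal{X}\cap B_\epsilon(\bar x)$, $y\in\mathcal{X}$, where $f_x(y):=h(F(x)+\nabla F(x)(y-x))$; (sharpness) $f(x)-\inf_{\mathcal{X}}f\ge\mu\,\mathrm{dist}(x,\mathcal{X}^* )$ for all $x\in\mathcal{X}\cap B_\epsilon(\bar x)$. Let $\beta\ge\rho$ and let $x_0\in B_{\epsilon/2}(\bar x)\cap\mathcal{X}$ satisfy $$f(x_0)-\min_{\mathcal{X}}f\le\min\Big\{\frac{\beta\epsilon^2}{25},\frac{\mu^2}{2\beta}\Big\}.$$ Consider the prox-linear iterates $x_{k+1}=\operatorname{argmin}_{x\in\mathcal{X}}\big\{h\big(F(x_k)+\nabla F(x_k)(x-x_k)\big)+\frac\beta2\|x-x_k\|^2\big\}$. Then all $x_k$ lie in $B_\epsilon(\bar x)$ and for all $k\ge0$ $$\mathrm{dist}(x_{k+1},\mathcal{X}^* )\le\frac\beta\mu\mathrm{dist}^2(x_k,\mathcal{X}^* ),\qquad f(x_{k+1})-\min_{\mathcal{X}}f\le\frac{\beta}{\mu^2}\big(f(x_k)-\min_{\mathcal{X}}f\big)^2.$$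 Moreover, the iterates converge to some $x_\infty\in\mathcal{X}^*$ with $\|x_k-x_\infty\|\le\frac{2\sqrt2\mu}{\beta}\big(\frac12\big)^{2^{k-1}}$ for all $k\ge0$.
   Context: $\|\cdot\|$ is the Euclidean norm on $\mathbf{E}$, $B_\epsilon(z)$ the closed ball of radius $\epsilon$ about $z$, and $\mathrm{dist}$ the Euclidean distance. *)

theory Defs
  imports "HOL-Analysis.Analysis"
begin

end

theory Submission
  imports Defs
begin

lemma aux: fixes P mx my a b d t \<beta> :: real
  assumes "P \<le> (1-t)*mx + t*my + \<beta>/2*((1-t)*a + t*b - t*(1-t)*d)" "P = mx + \<beta>/2*a"
  shows "t*P \<le> t*(my + \<beta>/2*b - (1-t)*(\<beta>/2*d))"
proof -
  have "(1-t)*mx + t*my + \<beta>/2*((1-t)*a + t*b - t*(1-t)*d) = (1-t)*P + t*(my + \<beta>/2*b - (1-t)*(\<beta>/2*d))"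
    by (simp add: assms(2) field_simps)
  then show ?thesis using assms(1) by (simp add: algebra_simps)
qed
lemma norm_cvx_id:
  fixes a b c :: "'e::real_inner"
  shows "(norm ((1-t)*\<^sub>R a + t*\<^sub>R b - c))\<^sup>2 = (1-t)*(norm (a-c))\<^sup>2 + t*(norm (b-c))\<^sup>2 - t*(1-t)*(norm (b-a))\<^sup>2"
proof -
  define A where "A = a - c"
  define B where "B = b - c"
  have e: "(1-t)*\<^sub>R a + t*\<^sub>R b - c = A + t *\<^sub>R (B - A)" by (simp add: A_def B_def algebra_simps)
  have e2: "b - a = B - A" by (simp add: A_def B_def)
  have e3: "a - c = A" "b - c = B" by (simp_all add: A_def B_def)
  show ?thesis unfolding e e2 e3
    by (simp add: power2_norm_eq_inner inner_diff_left inner_diff_right inner_add_left inner_add_right inner_commute) (simp add: algebra_simps)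
qed
lemma small_t:
  fixes A D :: real
  assumes "\<And>t. 0 < t \<Longrightarrow> t < 1 \<Longrightarrow> A \<le> B - (1-t)*D" "D \<ge> 0"
  shows "A \<le> B - D"
proof (rule ccontr)
  assume "\<not> ?thesis"
  then have e: "A + D - B > 0" by simp
  have D: "D > 0"
  proof (rule ccontr)
    assume "\<not> D > 0" then have "D = 0" using assms(2) by simp
    with assms(1)[of "1/2"] e show False by simp
  qed
  define t where "t = min (1/2) ((A + D - B)/(2*D))"
  have t: "0 < t" "t < 1" using e D by (auto simp: t_def)
  have "t \<le> (A + D - B)/(2*D)" by (simp add: t_def)
  then have "t * D \<le> (A + D - B)/(2*D) * D" using D by (rule mult_right_mono[OF _ less_imp_le])
  also have "\<dots> = (A + D - B)/2" using D by simp
  finally have "t * D \<le> (A + D - B)/2" .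
  with assms(1)[OF t] e show False by (simp add: algebra_simps)
qed
lemma sc_min:
  fixes m :: "'e::real_inner \<Rightarrow> real"
  assumes S: "convex S"
    and mc: "\<And>a b t. a\<in>S \<Longrightarrow> b\<in>S \<Longrightarrow> 0\<le>t \<Longrightarrow> t\<le>1 \<Longrightarrow> m((1-t)*\<^sub>R a + t*\<^sub>R b) \<le> (1-t)*m a + t*m b"
    and xp: "xp \<in> S"
    and opt: "\<forall>y\<in>S. m xp + \<beta>/2*(norm(xp-c))\<^sup>2 \<le> m y + \<beta>/2*(norm(y-c))\<^sup>2"
    and b: "\<beta> > 0" and y: "y \<in> S"
  shows "m xp + \<beta>/2*(norm(xp-c))\<^sup>2 + \<beta>/2*(norm(y-xp))\<^sup>2 \<le> m y + \<beta>/2*(norm(y-c))\<^sup>2"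
proof -
  let ?P = "m xp + \<beta>/2*(norm(xp-c))\<^sup>2" and ?Q = "m y + \<beta>/2*(norm(y-c))\<^sup>2"
  have "?P \<le> ?Q - (1-t)*(\<beta>/2*(norm(y-xp))\<^sup>2)" if t: "0<t" "t<1" for t
  proof -
    define w where "w = (1-t)*\<^sub>R xp + t*\<^sub>R y"
    have wS: "w \<in> S" unfolding w_def using S xp y t by (simp add: convex_alt)
    have "?P \<le> m w + \<beta>/2*(norm(w-c))\<^sup>2" using opt wS by blast
    also have "\<dots> \<le> (1-t)*m xp + t*m y + \<beta>/2*((1-t)*(norm (xp-c))\<^sup>2 + t*(norm (y-c))\<^sup>2 - t*(1-t)*(norm (y-xp))\<^sup>2)"
      using mc[OF xp y, of t] t unfolding w_def norm_cvx_id by simp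
    finally have "?P \<le> (1-t)*m xp + t*m y + \<beta>/2*((1-t)*(norm (xp-c))\<^sup>2 + t*(norm (y-c))\<^sup>2 - t*(1-t)*(norm (y-xp))\<^sup>2)" .
    then have "t*?P \<le> t*(?Q - (1-t)*(\<beta>/2*(norm(y-xp))\<^sup>2))" by (rule aux) simp
    then show ?thesis using t by simp
  qed
  then have "?P \<le> ?Q - \<beta>/2*(norm(y-xp))\<^sup>2" by (rule small_t) (use b in auto)
  then show ?thesis by simp
qed
lemma qsum1:
  fixes q :: "nat \<Rightarrow> real"
  assumes "\<forall>j. q j \<ge> 0" "\<forall>j<N. q (Suc j) \<le> (q j)\<^sup>2" "q 1 \<le> 1/4"
  shows "(\<Sum>j\<in>{1..N}. q j) \<le> q 1 + 16/15*(q 1)\<^sup>2"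
  using assms
proof (induction N arbitrary: q)
  case 0
  then show ?case by simp
next
  case (Suc N)
  show ?case
  proof (cases "N = 0")
    case True
    then show ?thesis using Suc.prems by simp
  next
    case False
    have q2: "q 2 \<le> (q 1)\<^sup>2" using Suc.prems(2) False by (metis Suc_1 One_nat_def Suc_less_eq zero_less_Suc gr0I)
    have q1: "0 \<le> q 1" "q 1 \<le> 1/4" using Suc.prems by auto
    have sq: "(q 1)\<^sup>2 \<le> 1/16" using power_mono[OF q1(2) q1(1), of 2] by (simp add: power_divide)
    have IH: "(\<Sum>j\<in>{1..N}. q (Suc j)) \<le> q 2 + 16/15*(q 2)\<^sup>2"
      using Suc.IH[of "\<lambda>j. q (Suc j)"] Suc.prems q2 sq by (simp add: numeral_2_eq_2)
    have s1: "(\<Sum>j\<in>{1..Suc N}. q j) = q 1 + (\<Sum>j\<in>{Suc 1..Suc N}. q j)"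
      by (rule sum.atLeast_Suc_atMost) simp
    have s2: "(\<Sum>j\<in>{Suc 1..Suc N}. q j) = (\<Sum>j\<in>{1..N}. q (Suc j))"
      by (rule sum.shift_bounds_cl_Suc_ivl)
    have "(\<Sum>j\<in>{1..Suc N}. q j) = q 1 + (\<Sum>j\<in>{1..N}. q (Suc j))"
      using s1 s2 by simp
    also have "\<dots> \<le> q 1 + q 2 + 16/15*(q 2)\<^sup>2" using IH by simp
    also have "\<dots> \<le> q 1 + (q 1)\<^sup>2 + 16/15*((q 1)\<^sup>2)\<^sup>2"
    proof -
      have "(q 2)\<^sup>2 \<le> ((q 1)\<^sup>2)\<^sup>2" using power_mono[OF q2, of 2] Suc.prems(1) by auto
      then show ?thesis using q2 by linarith
    qed
    also have "\<dots> \<le> q 1 + 16/15*(q 1)\<^sup>2"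
    proof -
      have "(q 1)\<^sup>2 * (q 1)\<^sup>2 \<le> (q 1)\<^sup>2 * (1/16)" by (rule mult_left_mono[OF sq]) simp
      then have "((q 1)\<^sup>2)\<^sup>2 \<le> (q 1)\<^sup>2 * (1/16)" by (metis power2_eq_square)
      then show ?thesis by simp
    qed
    finally show ?thesis .
  qed
qed

lemma qsum2:
  fixes q :: "nat \<Rightarrow> real"
  assumes "\<forall>j. q j \<ge> 0" "\<forall>j<N. q (Suc j) \<le> (q j)\<^sup>2" "q 0 \<le> t" "t \<le> 1/2"
  shows "(\<Sum>j\<in>{1..N}. q j) \<le> 19/15 * t\<^sup>2"
proof (cases "N = 0")
  case True then show ?thesis by simp
next
  case False
  have "q 1 \<le> (q 0)\<^sup>2" using assms(2) False by auto
  also have "\<dots> \<le> t\<^sup>2" using assms(1,3) power_mono by blast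
  finally have q1: "q 1 \<le> t\<^sup>2" .
  have t0: "0 \<le> t" using assms(1,3) by (metis order.trans)
  have t2: "t\<^sup>2 \<le> 1/4" using power_mono[OF assms(4) t0, of 2] by (simp add: power_divide)
  have "(\<Sum>j\<in>{1..N}. q j) \<le> q 1 + 16/15*(q 1)\<^sup>2" using qsum1[OF assms(1,2)] q1 t2 by simp
  also have "\<dots> \<le> q 1 + 16/15*(q 1 * (1/4))"
  proof -
    have "q 1 * q 1 \<le> q 1 * (1/4)" using q1 t2 assms(1) by (intro mult_left_mono) auto
    then show ?thesis by (simp add: power2_eq_square)
  qed
  also have "\<dots> \<le> 19/15 * t\<^sup>2" using q1 by simp
  finally show ?thesis .
qed

lemma ptail0:
  assumes "k \<ge> 1"
  shows "(\<Sum>j\<in>{k..<k+m}. (1/2::real)^(2^j)) \<le> 4/3 * (1/2)^(2^k)"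
  using assms
proof (induction m arbitrary: k)
  case 0 then show ?case by simp
next
  case (Suc m)
  have IH: "(\<Sum>j\<in>{Suc k..<Suc k+m}. (1/2::real)^(2^j)) \<le> 4/3 * (1/2)^(2^Suc k)"
    by (rule Suc.IH) (use Suc.prems in simp)
  have "(2::nat) \<le> 2^k" using Suc.prems by (metis power_one_right power_increasing_iff one_less_numeral_iff semiring_norm(76))
  then have pk: "(1/2::real)^(2^k) \<le> (1/2)^2" by (rule power_decreasing) auto
  have "(1/2::real)^(2^Suc k) = ((1/2)^(2^k))\<^sup>2" by (simp add: power_mult[symmetric] mult.commute)
  also have "\<dots> \<le> (1/2)^(2^k) * (1/4)" using pk by (simp add: power2_eq_square mult_left_mono)
  finally have ps: "(1/2::real)^(2^Suc k) \<le> (1/2)^(2^k) * (1/4)" .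
  have "(\<Sum>j\<in>{k..<k+Suc m}. (1/2::real)^(2^j)) = (1/2)^(2^k) + (\<Sum>j\<in>{Suc k..<Suc k+m}. (1/2::real)^(2^j))"
  proof -
    have e: "k + Suc m = Suc k + m" by simp
    show ?thesis unfolding e by (rule sum.atLeast_Suc_lessThan) simp
  qed
  also have "\<dots> \<le> 4/3 * (1/2)^(2^k)" using IH ps by simp
  finally show ?case .
qed

lemma ptail:
  assumes "k \<ge> 1"
  shows "(\<Sum>j\<in>{k..<n}. (1/2::real)^(2^j)) \<le> 4/3 * (1/2)^(2^k)"
proof (cases "n \<le> k")
  case True then show ?thesis by simp
next
  case False
  then have "n = k + (n - k)" by simp
  then show ?thesis using ptail0[OF assms, of "n-k"] by metis
qed

lemma norm_tele:
  fixes x :: "nat \<Rightarrow> 'a::real_normed_vector"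
  assumes "k \<le> n"
  shows "norm (x n - x k) \<le> (\<Sum>j\<in>{k..<n}. norm (x (Suc j) - x j))"
  using assms
proof (induction n rule: dec_induct)
  case base then show ?case by simp
next
  case (step n)
  have "norm (x (Suc n) - x k) \<le> norm (x (Suc n) - x n) + norm (x n - x k)"
    using norm_triangle_ineq[of "x (Suc n) - x n" "x n - x k"] by simp
  then show ?case using step by simp
qed
lemma numeric:
  fixes a \<beta> \<mu> \<epsilon> :: real
  assumes "a \<ge> 0" "\<beta> > 0" "\<mu> > 0" "\<epsilon> > 0" "a \<le> \<beta> * \<epsilon>\<^sup>2 / 25" "a \<le> \<mu>\<^sup>2 / (2 * \<beta>)"
  shows "sqrt (2 * a / \<beta>) + (1 + sqrt 2) * (\<mu>/\<beta>) * (19/15 * (\<beta> * a / \<mu>\<^sup>2)\<^sup>2) \<le> \<epsilon>/2"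
proof -
  define S where "S = sqrt 2"
  have SS: "S * S = 2" unfolding S_def by simp
  have S0: "S \<ge> 0" unfolding S_def by simp
  have "a / \<beta> \<le> (\<beta> * \<epsilon>\<^sup>2 / 25) / \<beta>" using assms(2,5) by (intro divide_right_mono) auto
  also have "\<dots> = \<epsilon>\<^sup>2 / 25" using assms(2) by simp
  finally have ab: "a / \<beta> \<le> \<epsilon>\<^sup>2 / 25" .
  have sq1: "(S * \<epsilon> / 5)\<^sup>2 = 2 * (\<epsilon>\<^sup>2 / 25)" using SS by (simp add: power_mult_distrib power_divide power2_eq_square)
  have "2 * a / \<beta> \<le> (S * \<epsilon> / 5)\<^sup>2" unfolding sq1 using ab by simp
  then have t1: "sqrt (2 * a / \<beta>) \<le> S * \<epsilon> / 5" using assms(4) S0 by (intro real_le_lsqrt) auto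
  define r where "r = a / \<mu>"
  define u where "u = \<beta> * a / \<mu>\<^sup>2"
  have u0: "0 \<le> u" unfolding u_def using assms by simp
  have "u \<le> \<beta> * (\<mu>\<^sup>2 / (2 * \<beta>)) / \<mu>\<^sup>2" unfolding u_def using assms
    by (intro divide_right_mono mult_left_mono) auto
  also have "\<dots> = 1/2" using assms(2,3) by simp
  finally have u1: "u \<le> 1/2" .
  have aa: "a * a \<le> (\<beta> * \<epsilon>\<^sup>2 / 25) * (\<mu>\<^sup>2 / (2 * \<beta>))" using assms by (intro mult_mono) auto
  have m: "(\<beta> * \<epsilon>\<^sup>2 / 25) * (\<mu>\<^sup>2 / (2 * \<beta>)) = \<epsilon>\<^sup>2 * \<mu>\<^sup>2 / 50" using assms(2) by simp
  have "r\<^sup>2 = (a * a) / \<mu>\<^sup>2" by (simp add: r_def power_divide power2_eq_square)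
  also have "\<dots> \<le> (\<epsilon>\<^sup>2 * \<mu>\<^sup>2 / 50) / \<mu>\<^sup>2" using aa m by (intro divide_right_mono) auto
  also have "\<dots> = \<epsilon>\<^sup>2 / 50" using assms(3) by simp
  also have "\<dots> = (S * \<epsilon> / 10)\<^sup>2" using SS by (simp add: power_mult_distrib power_divide power2_eq_square)
  finally have rsq: "r\<^sup>2 \<le> (S * \<epsilon> / 10)\<^sup>2" .
  have nn: "0 \<le> S * \<epsilon> / 10" using assms(4) S0 by simp
  have r: "r \<le> S * \<epsilon> / 10" by (rule power2_le_imp_le[OF rsq nn])
  have r0: "r \<ge> 0" unfolding r_def using assms by simp
  have e: "(\<mu>/\<beta>) * (\<beta> * a / \<mu>\<^sup>2)\<^sup>2 = r * u" unfolding r_def u_def using assms(2,3)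
    by (simp add: power2_eq_square)
  have "r * u \<le> (S * \<epsilon> / 10) * (1/2)" using r u0 u1 r0 by (intro mult_mono) auto
  then have "(1 + S) * (19/15) * (r * u) \<le> (1 + S) * (19/15) * ((S * \<epsilon> / 10) * (1/2))"
    using S0 by (intro mult_left_mono) auto
  moreover have "(1 + S) * (\<mu>/\<beta>) * (19/15 * (\<beta> * a / \<mu>\<^sup>2)\<^sup>2) = (1 + S) * (19/15) * (r * u)"
  proof -
    have "(1 + S) * (\<mu>/\<beta>) * (19/15 * (\<beta> * a / \<mu>\<^sup>2)\<^sup>2) = (1 + S) * (19/15) * ((\<mu>/\<beta>) * (\<beta> * a / \<mu>\<^sup>2)\<^sup>2)"
      by (simp only: mult.assoc mult.commute mult.left_commute)
    then show ?thesis unfolding e .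
  qed
  ultimately have t2: "(1 + S) * (\<mu>/\<beta>) * (19/15 * (\<beta> * a / \<mu>\<^sup>2)\<^sup>2) \<le> (1 + S) * (19/15) * ((S * \<epsilon> / 10) * (1/2))"
    by linarith
  have s2: "S \<le> 112/79" unfolding S_def by (rule real_le_lsqrt) (auto simp: power2_eq_square)
  have "(1 + S) * (19/15) * ((S * \<epsilon> / 10) * (1/2)) = \<epsilon> * (19/300) * (S + S * S)" by (simp add: algebra_simps)
  also have "\<dots> = \<epsilon> * ((19/300) * S + 38/300)" using SS by (simp add: algebra_simps)
  finally have t3: "(1 + S) * (19/15) * ((S * \<epsilon> / 10) * (1/2)) = \<epsilon> * ((19/300) * S + 38/300)" .
  have t4: "S * \<epsilon> / 5 = \<epsilon> * (S / 5)" by simp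
  have "S / 5 + ((19/300) * S + 38/300) \<le> 1/2" using s2 by linarith
  then have "\<epsilon> * (S / 5 + ((19/300) * S + 38/300)) \<le> \<epsilon> * (1/2)" using assms(4) by (intro mult_left_mono) auto
  then have "S * \<epsilon> / 5 + \<epsilon> * ((19/300) * S + 38/300) \<le> \<epsilon>/2" by (simp add: algebra_simps)
  then show ?thesis using t1 t2 t3 unfolding S_def by linarith
qed

theorem theorem5p7:
  fixes h :: "'y::euclidean_space \<Rightarrow> real"
    and F :: "'e::euclidean_space \<Rightarrow> 'y"
    and F' :: "'e \<Rightarrow> ('e \<Rightarrow> 'y)"
    and X :: "'e set"
    and xbar x0 :: 'e
    and \<epsilon> \<mu> \<rho> \<beta> :: real
    and x :: "nat \<Rightarrow> 'e"
  assumes X_ne: "X \<noteq> {}" and X_closed: "closed X" and X_convex: "convex X"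
    and h_convex: "convex_on UNIV h"
    and F_deriv: "\<And>z. (F has_derivative F' z) (at z)"
    and Xstar_ne: "{z \<in> X. \<forall>y\<in>X. h (F z) \<le> h (F y)} \<noteq> {}"
    and xbar: "xbar \<in> {z \<in> X. \<forall>y\<in>X. h (F z) \<le> h (F y)}"
    and pos: "\<epsilon> > 0" "\<mu> > 0" "\<rho> > 0"
    and approx: "\<And>z y. z \<in> X \<inter> cball xbar \<epsilon> \<Longrightarrow> y \<in> X \<Longrightarrow>
        \<bar>h (F y) - h (F z + F' z (y - z))\<bar> \<le> \<rho> / 2 * (norm (y - z))\<^sup>2"
    and sharp: "\<And>z. z \<in> X \<inter> cball xbar \<epsilon> \<Longrightarrow>
        h (F z) - (INF y\<in>X. h (F y)) \<ge> \<mu> * infdist z {z \<in> X. \<forall>y\<in>X. h (F z) \<le> h (F y)}"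
    and beta: "\<beta> \<ge> \<rho>"
    and x0: "x0 \<in> cball xbar (\<epsilon> / 2) \<inter> X"
    and x0_gap: "h (F x0) - h (F xbar) \<le> min (\<beta> * \<epsilon>\<^sup>2 / 25) (\<mu>\<^sup>2 / (2 * \<beta>))"
    and x_0: "x 0 = x0"
    and x_step: "\<And>k. x (Suc k) \<in> X \<and>
        (\<forall>y\<in>X. h (F (x k) + F' (x k) (x (Suc k) - x k)) + \<beta> / 2 * (norm (x (Suc k) - x k))\<^sup>2
               \<le> h (F (x k) + F' (x k) (y - x k)) + \<beta> / 2 * (norm (y - x k))\<^sup>2)"
  shows "(\<forall>k. x k \<in> cball xbar \<epsilon>)
    \<and> (\<forall>k. infdist (x (Suc k)) {z \<in> X. \<forall>y\<in>X. h (F z) \<le> h (F y)}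
            \<le> \<beta> / \<mu> * (infdist (x k) {z \<in> X. \<forall>y\<in>X. h (F z) \<le> h (F y)})\<^sup>2)
    \<and> (\<forall>k. h (F (x (Suc k))) - h (F xbar) \<le> \<beta> / \<mu>\<^sup>2 * (h (F (x k)) - h (F xbar))\<^sup>2)
    \<and> (\<exists>xinf \<in> {z \<in> X. \<forall>y\<in>X. h (F z) \<le> h (F y)}. x \<longlonglongrightarrow> xinf \<and>
        (\<forall>k. norm (x k - xinf) \<le> 2 * sqrt 2 * \<mu> / \<beta> * (1/2) powr (2 powr (real k - 1))))"
proof -
  define Xs where "Xs = {z \<in> X. \<forall>y\<in>X. h (F z) \<le> h (F y)}"
  define fs where "fs = h (F xbar)"
  define d where "d = (\<lambda>k. infdist (x k) Xs)"
  define g where "g = (\<lambda>k. h (F (x k)) - fs)"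
  define s where "s = (\<lambda>k. norm (x (Suc k) - x k))"
  define a where "a = g 0"
  define t where "t = \<beta> * a / \<mu>\<^sup>2"
  have bpos: "\<beta> > 0" using beta pos by linarith
  have mpos: "\<mu> > 0" "\<epsilon> > 0" "\<rho> > 0" using pos by auto
  have xX: "x k \<in> X" for k
  proof (cases k)
    case 0 then show ?thesis using x0 x_0 by auto
  next
    case (Suc j) then show ?thesis using x_step[of j] by auto
  qed
  have xbarX: "xbar \<in> X" using xbar by auto
  have xbarmin: "fs \<le> h (F y)" if "y \<in> X" for y using xbar that fs_def by auto
  have gnn: "g k \<ge> 0" for k using xbarmin[OF xX[of k]] g_def by auto
  have dnn: "d k \<ge> 0" for k unfolding d_def by (rule infdist_nonneg)
  have snn: "s k \<ge> 0" for k unfolding s_def by simp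
  have Xs_ne: "Xs \<noteq> {}" using xbar Xs_def by auto
  have Xs_eq: "Xs = X \<inter> {z. h (F z) \<le> fs}"
    unfolding Xs_def using xbarmin xbar fs_def by (auto intro: order.trans)
  have contF: "isCont F z" for z using F_deriv[of z] has_derivative_continuous by blast
  have conth: "isCont h z" for z
    using convex_on_continuous[OF open_UNIV h_convex] continuous_on_eq_continuous_at[OF open_UNIV] by blast
  have cont: "continuous_on UNIV (\<lambda>z. h (F z))"
    by (rule continuous_at_imp_continuous_on) (use contF conth isCont_o2 in blast)
  have Xs_closed: "closed Xs" unfolding Xs_eq
    by (intro closed_Int X_closed closed_Collect_le cont continuous_on_const)
  have INF: "(INF y\<in>X. h (F y)) = fs"
    by (rule cInf_eq_minimum) (use xbarX xbarmin fs_def in auto)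
  have sharp': "\<mu> * d k \<le> g k" if "x k \<in> cball xbar \<epsilon>" for k
    using sharp[of "x k"] xX[of k] that INF unfolding d_def g_def Xs_def by auto
  have stepA: "h (F (x (Suc k))) + \<beta>/2*(norm (y - x (Suc k)))\<^sup>2 \<le> h (F y) + \<beta>*(norm (y - x k))\<^sup>2"
    if xk: "x k \<in> cball xbar \<epsilon>" and y: "y \<in> X" for k y
  proof -
    define L where "L = F' (x k)"
    have lin: "linear L" unfolding L_def using F_deriv has_derivative_linear by blast
    define m where "m = (\<lambda>y. h (F (x k) + L (y - x k)))"
    have mc: "m((1-u)*\<^sub>R p + u*\<^sub>R q) \<le> (1-u)*m p + u*m q"
      if "p\<in>X" "q\<in>X" "0\<le>u" "u\<le>1" for p q u
    proof -
      have "F (x k) + L ((1-u)*\<^sub>R p + u*\<^sub>R q - x k)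
          = (1-u) *\<^sub>R (F (x k) + L (p - x k)) + u *\<^sub>R (F (x k) + L (q - x k))"
      proof -
        have "(1-u)*\<^sub>R p + u*\<^sub>R q - x k = (1-u) *\<^sub>R (p - x k) + u *\<^sub>R (q - x k)"
          by (simp add: algebra_simps)
        then have "L ((1-u)*\<^sub>R p + u*\<^sub>R q - x k) = (1-u) *\<^sub>R L (p - x k) + u *\<^sub>R L (q - x k)"
          using lin by (simp add: linear_add linear_scale)
        then show ?thesis by (simp add: algebra_simps)
      qed
      then show ?thesis unfolding m_def using convex_onD[OF h_convex, of u] that by simp
    qed
    have opt: "\<forall>y\<in>X. m (x (Suc k)) + \<beta>/2*(norm(x (Suc k) - x k))\<^sup>2 \<le> m y + \<beta>/2*(norm(y - x k))\<^sup>2"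
      using x_step[of k] unfolding m_def L_def by blast
    have sc: "m (x (Suc k)) + \<beta>/2*(norm(x (Suc k) - x k))\<^sup>2 + \<beta>/2*(norm(y - x (Suc k)))\<^sup>2 \<le> m y + \<beta>/2*(norm(y - x k))\<^sup>2"
      by (rule sc_min[OF X_convex mc xX opt bpos y])
    have xkX: "x k \<in> X \<inter> cball xbar \<epsilon>" using xk xX by auto
    have a1: "h (F (x (Suc k))) - m (x (Suc k)) \<le> \<rho>/2*(norm (x (Suc k) - x k))\<^sup>2"
      using abs_le_D1[OF approx[OF xkX xX[of "Suc k"]]] unfolding m_def L_def by simp
    have a2: "m y - h (F y) \<le> \<rho>/2*(norm (y - x k))\<^sup>2"
      using abs_le_D2[OF approx[OF xkX y]] unfolding m_def L_def by simp
    have r1: "\<rho>/2*(norm (x (Suc k) - x k))\<^sup>2 \<le> \<beta>/2*(norm (x (Suc k) - x k))\<^sup>2"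
      using beta by (intro mult_right_mono) auto
    have r2: "\<rho>/2*(norm (y - x k))\<^sup>2 \<le> \<beta>/2*(norm (y - x k))\<^sup>2"
      using beta by (intro mult_right_mono) auto
    show ?thesis using sc a1 a2 r1 r2 by linarith
  qed
  have stepB: "\<beta>/2*(s k)\<^sup>2 \<le> g k - g (Suc k)" if xk: "x k \<in> cball xbar \<epsilon>" for k
    using stepA[OF xk xX[of k]] unfolding s_def g_def by (simp add: norm_minus_commute)
  have stepC: "g (Suc k) \<le> \<beta> * (d k)\<^sup>2 \<and> s k \<le> (1 + sqrt 2) * d k" if xk: "x k \<in> cball xbar \<epsilon>" for k
  proof -
    obtain z where z: "z \<in> Xs" "\<And>w. w \<in> Xs \<Longrightarrow> dist (x k) z \<le> dist (x k) w"
      using distance_attains_inf[OF Xs_closed Xs_ne] by blast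
    have dz: "d k = norm (z - x k)"
    proof (rule antisym)
      show "d k \<le> norm (z - x k)" unfolding d_def using infdist_le[OF z(1), of "x k"] by (simp add: dist_norm norm_minus_commute[of "x k" z])
      have "dist (x k) z \<le> (INF w\<in>Xs. dist (x k) w)" by (rule cINF_greatest[OF Xs_ne z(2)])
      then show "norm (z - x k) \<le> d k" unfolding d_def infdist_notempty[OF Xs_ne] by (simp add: dist_norm norm_minus_commute[of "x k" z])
    qed
    have zX: "z \<in> X" and hz: "h (F z) = fs" using z(1) xbarmin xbarX unfolding Xs_def fs_def by (auto intro: antisym)
    have A: "h (F (x (Suc k))) + \<beta>/2*(norm (z - x (Suc k)))\<^sup>2 \<le> fs + \<beta>*(d k)\<^sup>2"
      using stepA[OF xk zX] hz dz by simp
    have nn: "0 \<le> \<beta>/2*(norm (z - x (Suc k)))\<^sup>2" using bpos by simp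
    have g1: "g (Suc k) \<le> \<beta> * (d k)\<^sup>2" using A nn unfolding g_def by linarith
    have "\<beta>/2*(norm (z - x (Suc k)))\<^sup>2 \<le> \<beta>*(d k)\<^sup>2" using A gnn[of "Suc k"] unfolding g_def by linarith
    then have "(norm (z - x (Suc k)))\<^sup>2 \<le> 2 * (d k)\<^sup>2" using bpos by (simp add: field_simps)
    then have "norm (z - x (Suc k)) \<le> sqrt (2 * (d k)\<^sup>2)" by (rule real_le_rsqrt)
    also have "\<dots> = sqrt 2 * d k" using dnn[of k] by (simp add: real_sqrt_mult)
    finally have n1: "norm (z - x (Suc k)) \<le> sqrt 2 * d k" .
    have "s k \<le> norm (x (Suc k) - z) + norm (z - x k)" unfolding s_def
      using norm_triangle_ineq[of "x (Suc k) - z" "z - x k"] by simp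
    then have "s k \<le> (1 + sqrt 2) * d k" using n1 dz by (simp add: norm_minus_commute algebra_simps)
    then show ?thesis using g1 by simp
  qed
  have t_le: "t \<le> 1/2"
  proof -
    have "a \<le> \<mu>\<^sup>2 / (2 * \<beta>)" using x0_gap unfolding a_def g_def fs_def x_0 by simp
    then show ?thesis unfolding t_def using bpos mpos by (simp add: field_simps)
  qed
  have t_nn: "t \<ge> 0" unfolding t_def a_def using gnn bpos by simp
  have s0: "s 0 \<le> sqrt (2 * a / \<beta>)" if "x 0 \<in> cball xbar \<epsilon>"
  proof -
    have "\<beta>/2*(s 0)\<^sup>2 \<le> a" using stepB[OF that] gnn[of 1] unfolding a_def by simp
    then have "(s 0)\<^sup>2 \<le> 2 * a / \<beta>" using bpos by (simp add: field_simps)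
    then show ?thesis by (rule real_le_rsqrt)
  qed
  have x0ball: "x 0 \<in> cball xbar \<epsilon>" using x0 x_0 mpos by auto
  have q0: "\<beta>/\<mu> * d 0 \<le> t"
  proof -
    have "\<mu> * d 0 \<le> a" using sharp'[OF x0ball] unfolding a_def .
    then show ?thesis unfolding t_def using mpos bpos by (simp add: field_simps power2_eq_square)
  qed
  have ball: "\<forall>j\<le>k. x j \<in> cball xbar \<epsilon>" for k
  proof (induction k)
    case 0 then show ?case using x0ball by simp
  next
    case (Suc k)
    define q where "q = (\<lambda>j. \<beta>/\<mu> * d j)"
    have qnn: "\<forall>j. q j \<ge> 0" unfolding q_def using dnn bpos mpos by simp
    have qrec: "\<forall>j<k. q (Suc j) \<le> (q j)\<^sup>2"
    proof (intro allI impI)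
      fix j assume "j < k"
      then have bj: "x j \<in> cball xbar \<epsilon>" "x (Suc j) \<in> cball xbar \<epsilon>" using Suc.IH by auto
      have "\<mu> * d (Suc j) \<le> \<beta> * (d j)\<^sup>2" using sharp'[OF bj(2)] stepC[OF bj(1)] by linarith
      then show "q (Suc j) \<le> (q j)\<^sup>2" unfolding q_def using mpos bpos
        by (simp add: field_simps power2_eq_square)
    qed
    have qs: "(\<Sum>j\<in>{1..k}. q j) \<le> 19/15 * t\<^sup>2"
      by (rule qsum2[OF qnn qrec _ t_le]) (use q0 q_def in simp)
    have "(\<Sum>j\<in>{1..k}. s j) \<le> (\<Sum>j\<in>{1..k}. (1 + sqrt 2) * (\<mu>/\<beta>) * q j)"
    proof (rule sum_mono)
      fix j assume "j \<in> {1..k}"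
      then have "x j \<in> cball xbar \<epsilon>" using Suc.IH by auto
      then have "s j \<le> (1 + sqrt 2) * d j" using stepC by blast
      also have "d j = (\<mu>/\<beta>) * q j" unfolding q_def using mpos bpos by simp
      finally show "s j \<le> (1 + sqrt 2) * (\<mu>/\<beta>) * q j" by (simp add: mult.assoc)
    qed
    also have "\<dots> = (1 + sqrt 2) * (\<mu>/\<beta>) * (\<Sum>j\<in>{1..k}. q j)" by (simp add: sum_distrib_left)
    also have "\<dots> \<le> (1 + sqrt 2) * (\<mu>/\<beta>) * (19/15 * t\<^sup>2)"
      using qs mpos bpos by (intro mult_left_mono) auto
    finally have ss: "(\<Sum>j\<in>{1..k}. s j) \<le> (1 + sqrt 2) * (\<mu>/\<beta>) * (19/15 * t\<^sup>2)" .
    have "norm (x (Suc k) - x 0) \<le> (\<Sum>j\<in>{0..<Suc k}. s j)" unfolding s_def by (rule norm_tele) simp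
    also have "(\<Sum>j\<in>{0..<Suc k}. s j) = s 0 + (\<Sum>j\<in>{1..k}. s j)"
      by (simp add: atLeastLessThanSuc_atLeastAtMost) (rule sum.atLeast_Suc_atMost, simp)
    finally have "norm (x (Suc k) - x 0) \<le> sqrt (2 * a / \<beta>) + (1 + sqrt 2) * (\<mu>/\<beta>) * (19/15 * t\<^sup>2)"
      using ss s0[OF x0ball] by linarith
    also have "\<dots> \<le> \<epsilon>/2" unfolding t_def
      by (rule numeric) (use gnn[of 0] x0_gap bpos mpos in \<open>auto simp: a_def g_def fs_def x_0\<close>)
    finally have n: "norm (x (Suc k) - x 0) \<le> \<epsilon>/2" .
    have "norm (x 0 - xbar) \<le> \<epsilon>/2" using x0 x_0 by (simp add: dist_norm norm_minus_commute)
    then have "norm (x (Suc k) - xbar) \<le> \<epsilon>"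
      using n norm_triangle_ineq[of "x (Suc k) - x 0" "x 0 - xbar"] by simp
    then have "x (Suc k) \<in> cball xbar \<epsilon>" by (simp add: dist_norm norm_minus_commute)
    then show ?case using Suc.IH le_Suc_eq by auto
  qed
  have allball: "x k \<in> cball xbar \<epsilon>" for k using ball[of k] by auto
  have P2: "d (Suc k) \<le> \<beta>/\<mu> * (d k)\<^sup>2" for k
  proof -
    have "\<mu> * d (Suc k) \<le> \<beta> * (d k)\<^sup>2" using sharp'[OF allball] stepC[OF allball[of k]] by (meson order.trans)
    then show ?thesis using mpos by (simp add: field_simps)
  qed
  have P3: "g (Suc k) \<le> \<beta>/\<mu>\<^sup>2 * (g k)\<^sup>2" for k
  proof -
    have "d k \<le> g k / \<mu>" using sharp'[OF allball[of k]] mpos by (simp add: field_simps)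
    then have "(d k)\<^sup>2 \<le> (g k / \<mu>)\<^sup>2" using dnn[of k] by (rule power_mono)
    then have "\<beta> * (d k)\<^sup>2 \<le> \<beta> * (g k / \<mu>)\<^sup>2" using bpos by simp
    then show ?thesis using stepC[OF allball[of k]] by (simp add: power_divide)
  qed
  define p where "p = (\<lambda>k. (1/2::real)^(2^k))"
  have qp: "\<beta>/\<mu> * d k \<le> p k" for k
  proof (induction k)
    case 0
    have "p 0 = 1/2" by (simp add: p_def)
    then show ?case using q0 t_le by linarith
  next
    case (Suc k)
    have "\<beta>/\<mu> * d (Suc k) \<le> (\<beta>/\<mu> * d k)\<^sup>2" using P2[of k] mpos bpos
      by (simp add: field_simps power2_eq_square)
    also have "\<dots> \<le> (p k)\<^sup>2" using Suc dnn[of k] mpos bpos by (intro power_mono) auto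
    also have "\<dots> = p (Suc k)" by (simp add: p_def power_mult[symmetric] mult.commute)
    finally show ?case .
  qed
  have dp: "d k \<le> (\<mu>/\<beta>) * p k" for k
  proof -
    have "d k = (\<mu>/\<beta>) * (\<beta>/\<mu> * d k)" using mpos bpos by simp
    also have "\<dots> \<le> (\<mu>/\<beta>) * p k" using qp[of k] mpos bpos by (intro mult_left_mono) auto
    finally show ?thesis .
  qed
  have sp: "s k \<le> (1 + sqrt 2) * (\<mu>/\<beta>) * p k" for k
  proof -
    have "s k \<le> (1 + sqrt 2) * d k" using stepC[OF allball[of k]] by blast
    also have "\<dots> \<le> (1 + sqrt 2) * ((\<mu>/\<beta>) * p k)" using dp[of k] by (intro mult_left_mono) auto
    finally show ?thesis by (simp add: mult.assoc)
  qed
  have s0b: "s 0 \<le> \<mu>/\<beta>"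
  proof -
    have "a \<le> \<mu>\<^sup>2 / (2 * \<beta>)" using x0_gap unfolding a_def g_def fs_def x_0 by simp
    then have "2 * a / \<beta> \<le> (\<mu>/\<beta>)\<^sup>2" using bpos by (simp add: field_simps power2_eq_square)
    then have "sqrt (2 * a / \<beta>) \<le> \<mu>/\<beta>" using mpos bpos by (intro real_le_lsqrt) auto
    then show ?thesis using s0[OF x0ball] by linarith
  qed
  have pgeo: "p k \<le> (1/2)^k" for k
    unfolding p_def by (rule power_decreasing) (auto intro: less_imp_le[OF less_exp])
  have ppos: "p k \<ge> 0" for k unfolding p_def by simp
  define C where "C = (1 + sqrt 2) * (\<mu>/\<beta>)"
  have Cnn: "C \<ge> 0" unfolding C_def using mpos bpos by simp
  have sumS: "summable s"
  proof (rule summable_comparison_test'[where g = "\<lambda>k. C * (1/2)^k" and N = 0])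
    show "summable (\<lambda>k. C * (1/2::real)^k)" by (intro summable_mult summable_geometric) simp
    fix k show "norm (s k) \<le> C * (1/2)^k" using sp[of k] snn[of k] pgeo[of k] Cnn unfolding C_def
      by (smt (verit) mult_left_mono real_norm_def)
  qed
  define D where "D = (\<lambda>k. x (Suc k) - x k)"
  have sumD: "summable D" unfolding D_def by (rule summable_norm_cancel) (use sumS s_def in simp)
  define xinf where "xinf = x 0 + suminf D"
  have conv: "x \<longlonglongrightarrow> xinf"
  proof -
    have "(\<lambda>n. x 0 + (\<Sum>i<n. D i)) \<longlonglongrightarrow> xinf" unfolding xinf_def
      by (intro tendsto_add tendsto_const summable_LIMSEQ sumD)
    moreover have "(\<lambda>n. x 0 + (\<Sum>i<n. D i)) = x" unfolding D_def
      by (rule ext) (simp add: sum_lessThan_telescope)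
    ultimately show ?thesis by simp
  qed
  have xinfXs: "xinf \<in> Xs"
  proof -
    have "(\<lambda>k. d k) \<longlonglongrightarrow> infdist xinf Xs" unfolding d_def by (intro tendsto_infdist conv)
    moreover have "(\<lambda>k. (\<mu>/\<beta>) * (1/2::real)^k) \<longlonglongrightarrow> 0"
      by (intro tendsto_mult_right_zero LIMSEQ_realpow_zero) auto
    moreover have "\<exists>N. \<forall>n\<ge>N. d n \<le> (\<mu>/\<beta>) * (1/2::real)^n"
    proof -
      have "d n \<le> (\<mu>/\<beta>) * (1/2::real)^n" for n
      proof -
        have "(\<mu>/\<beta>) * p n \<le> (\<mu>/\<beta>) * (1/2::real)^n" using pgeo[of n] mpos bpos by (intro mult_left_mono) auto
        then show ?thesis using dp[of n] by linarith
      qed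
      then show ?thesis by blast
    qed
    ultimately have "infdist xinf Xs \<le> 0" by (rule LIMSEQ_le)
    then have "infdist xinf Xs = 0" using infdist_nonneg[of xinf Xs] by simp
    then show ?thesis using in_closed_iff_infdist_zero[OF Xs_closed Xs_ne] by simp
  qed
  have tail: "norm (x k - xinf) \<le> 2 * sqrt 2 * \<mu> / \<beta> * (1/2) powr (2 powr (real k - 1))" for k
  proof -
    have s2: "1 \<le> sqrt 2" by simp
    have T: "norm (x k - x n) \<le> 2 * sqrt 2 * \<mu> / \<beta> * (1/2) powr (2 powr (real k - 1))" if "n \<ge> k" for n
    proof (cases "k = 0")
      case True
      have rhs: "2 * sqrt 2 * \<mu> / \<beta> * (1/2) powr (2 powr (real k - 1)) = 2 * (\<mu>/\<beta>)"
      proof -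
        have "(1/2::real) powr (2 powr (real k - 1)) = sqrt (1/2)" using True by (simp add: powr_half_sqrt)
        moreover have "sqrt 2 * sqrt (1/2) = 1" by (simp add: real_sqrt_mult[symmetric])
        ultimately show ?thesis by (simp add: field_simps)
      qed
      have b1: "norm (x k - x n) \<le> (\<Sum>j\<in>{0..<n}. s j)" using norm_tele[of 0 n x] True norm_minus_commute[of "x k" "x n"]
        unfolding s_def by simp
      have b2: "(\<Sum>j\<in>{0..<n}. s j) \<le> s 0 + (\<Sum>j\<in>{1..<n}. s j)"
      proof (cases n)
        case 0 then show ?thesis using snn by simp
      next
        case (Suc m) then show ?thesis by (simp add: sum.atLeast_Suc_lessThan)
      qed
      have "(\<Sum>j\<in>{1..<n}. s j) \<le> (\<Sum>j\<in>{1..<n}. C * p j)" using sp unfolding C_def by (intro sum_mono) auto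
      also have "\<dots> = C * (\<Sum>j\<in>{1..<n}. p j)" by (simp add: sum_distrib_left)
      also have "\<dots> \<le> C * (4/3 * p 1)" using ptail[of 1 n] Cnn unfolding p_def by (intro mult_left_mono) auto
      finally have b3: "(\<Sum>j\<in>{1..<n}. s j) \<le> C * (4/3 * p 1)" .
      have n1: "norm (x k - x n) \<le> s 0 + C * (4/3 * p 1)" using b1 b2 b3 by linarith
      have e: "C * (4/3 * p 1) = C/3" by (simp add: p_def power_divide)
      have "norm (x k - x n) \<le> \<mu>/\<beta> + C/3" using n1 s0b e by linarith
      also have "\<dots> \<le> 2 * (\<mu>/\<beta>)"
      proof -
        have "sqrt 2 \<le> 2" by (rule real_le_lsqrt) auto
        then have "C/3 \<le> \<mu>/\<beta>" unfolding C_def using mpos bpos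
          by (simp add: field_simps)
        then show ?thesis by simp
      qed
      finally have "norm (x k - x n) \<le> 2 * (\<mu>/\<beta>)" .
      then show ?thesis using rhs by linarith
    next
      case False
      then obtain k' where k': "k = Suc k'" by (cases k) auto
      have rhs: "(1/2::real) powr (2 powr (real k - 1)) = p k'"
      proof -
        have "real k - 1 = real k'" using k' by simp
        then have "(2::real) powr (real k - 1) = real (2^k')" by (simp add: powr_realpow)
        then show ?thesis unfolding p_def using powr_realpow[of "1/2::real" "2^k'"] by simp
      qed
      have pk: "p k \<le> p k' / 2"
      proof -
        have "p k' \<le> (1/2)^1" unfolding p_def by (rule power_decreasing) auto
        then have "p k' * p k' \<le> p k' * (1/2)" using ppos[of k'] by (intro mult_left_mono) auto
        moreover have "p k = p k' * p k'" using k' by (simp add: p_def mult_2 power_add)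
        ultimately show ?thesis by simp
      qed
      have "norm (x k - x n) \<le> (\<Sum>j\<in>{k..<n}. s j)" using norm_tele[OF that, of x] norm_minus_commute[of "x k" "x n"]
        unfolding s_def by simp
      also have "\<dots> \<le> (\<Sum>j\<in>{k..<n}. C * p j)" using sp unfolding C_def by (intro sum_mono) auto
      also have "\<dots> = C * (\<Sum>j\<in>{k..<n}. p j)" by (simp add: sum_distrib_left)
      also have "\<dots> \<le> C * (4/3 * p k)" using ptail[of k n] Cnn k' unfolding p_def by (intro mult_left_mono) auto
      also have "\<dots> \<le> C * (4/3 * (p k' / 2))" using pk Cnn by (intro mult_left_mono) auto
      also have "\<dots> \<le> 2 * sqrt 2 * \<mu> / \<beta> * p k'"
      proof -
        have "(1 + sqrt 2) * (2/3) = 2/3 + 2/3 * sqrt 2" by (simp add: algebra_simps)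
        then have "(1 + sqrt 2) * (2/3) \<le> 2 * sqrt 2" using s2 by linarith
        then have "(1 + sqrt 2) * (2/3) * ((\<mu>/\<beta>) * p k') \<le> 2 * sqrt 2 * ((\<mu>/\<beta>) * p k')"
          using mpos bpos ppos[of k'] by (intro mult_right_mono) auto
        then show ?thesis unfolding C_def by (simp add: field_simps)
      qed
      finally have "norm (x k - x n) \<le> 2 * sqrt 2 * \<mu> / \<beta> * p k'" .
      then show ?thesis using rhs by simp
    qed
    have "(\<lambda>n. norm (x k - x n)) \<longlonglongrightarrow> norm (x k - xinf)" by (intro tendsto_intros conv)
    then show ?thesis by (rule Lim_bounded[where M = k]) (use T in auto)
  qed
  show ?thesis
  proof (intro conjI allI)
    show "x k \<in> cball xbar \<epsilon>" for k by (rule allball)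
    show "infdist (x (Suc k)) {z \<in> X. \<forall>y\<in>X. h (F z) \<le> h (F y)}
            \<le> \<beta> / \<mu> * (infdist (x k) {z \<in> X. \<forall>y\<in>X. h (F z) \<le> h (F y)})\<^sup>2" for k
      using P2[of k] unfolding d_def Xs_def .
    show "h (F (x (Suc k))) - h (F xbar) \<le> \<beta> / \<mu>\<^sup>2 * (h (F (x k)) - h (F xbar))\<^sup>2" for k
      using P3[of k] unfolding g_def fs_def .
    show "\<exists>xinf \<in> {z \<in> X. \<forall>y\<in>X. h (F z) \<le> h (F y)}. x \<longlonglongrightarrow> xinf \<and>
        (\<forall>k. norm (x k - xinf) \<le> 2 * sqrt 2 * \<mu> / \<beta> * (1/2) powr (2 powr (real k - 1)))"
      using xinfXs conv tail unfolding Xs_def by blast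
  qed
qed

end
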